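(* Let $X$ be an exponential vector space over a field $K$. A subset of $X\smallsetminus X_0$ is a basis of $X\smallsetminus X_0$ if and only if it is a minimal generating subset of $X\smallsetminus X_0$ (i.e. it generates $X\smallsetminus X_0$ and no proper subset of it generates $X\smallsetminus X_0$).
   Context: An exponential vector space (evs) over a field $K$ is a partially ordered set $(X,\leq)$ with a binary operation $+$ on $X$ and a map $K\times X\to X$, $(\alpha,x)\mapsto \alpha x$, such that: (A1) $(X,+)$ is a commutative semigroup with identity $\theta$; (A2) $x\leq y$ implies $x+z\leq y+z$ and $\alpha x\leq \alpha y$ for all $z\in X$, $\alpha\in K$; (A3) $\alpha(x+y)=\alpha x+\alpha y$, $\alpha(\beta x)=(\alpha\beta)x$, $(\alpha+\beta)x\leq \alpha x+\beta x$, $1x=x$; (A4) $\alpha x=\theta$ iff $\alpha=0$ or $x=\theta$; (A5) $x+(-1)x=\theta$ iff $x\in X_0$, where $X_0:=\{z\in X: y\not\leq z \text{ for all } y\in X\smallsetminus\{z\}\}$ (the set of minimal elements, called the primitive space; it is a vector space over $K$); (A6) for each $x\in X$ there is $p\in X_0$ with $p\leq x$. For $x\in X\smallsetminus X_0$ let $L(x):=\{z\in X: z\geq \alpha x+p \text{ for some } \alpha\in K\smallsetminus\{0\},\ p\in X_0\}$. A subset $B\subseteq X\smallsetminus X_0$ generates $X\smallsetminus X_0$ if $X\smallsetminus X_0=\bigcup_{b\in B}L(b)$. Elements $x,y\in X\smallsetminus X_0$ are orderly dependent if $x\in L(y)$ or $y\in L(x)$, and orderly independent otherwise; $B\subseteq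 X\smallsetminus X_0$ is orderly independent if any two distinct members of $B$ are orderly independent. A basis of $X\smallsetminus X_0$ is an orderly independent subset of $X\smallsetminus X_0$ that generates $X\smallsetminus X_0$. *)

theory Defs
  imports Main
begin

text \<open>An exponential vector space over a field 'k is modelled on the whole carrier type 'x,
 with order le, addition add, identity zero (theta) and scalar multiplication smul.\<close>

definition primitive :: "('x \<Rightarrow> 'x \<Rightarrow> bool) \<Rightarrow> 'x set" where
  "primitive le = {z. \<forall>y. y \<noteq> z \<longrightarrow> \<not> le y z}"

definition evs :: "('x \<Rightarrow> 'x \<Rightarrow> bool) \<Rightarrow> ('x \<Rightarrow> 'x \<Rightarrow> 'x) \<Rightarrow> 'x
                    \<Rightarrow> ('k::field \<Rightarrow> 'x \<Rightarrow> 'x) \<Rightarrow> bool" where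
  "evs le add zero smul \<longleftrightarrow>
     \<comment> \<open>partial order\<close>
     (\<forall>x. le x x) \<and> (\<forall>x y. le x y \<and> le y x \<longrightarrow> x = y) \<and>
     (\<forall>x y z. le x y \<and> le y z \<longrightarrow> le x z) \<and>
     \<comment> \<open>(A1)\<close>
     (\<forall>x y z. add (add x y) z = add x (add y z)) \<and> (\<forall>x y. add x y = add y x) \<and>
     (\<forall>x. add x zero = x) \<and>
     \<comment> \<open>(A2)\<close>
     (\<forall>x y z. le x y \<longrightarrow> le (add x z) (add y z)) \<and>
     (\<forall>x y a. le x y \<longrightarrow> le (smul a x) (smul a y)) \<and>
     \<comment> \<open>(A3)\<close>
     (\<forall>a x y. smul a (add x y) = add (smul a x) (smul a y)) \<and>
     (\<forall>a b x. smul a (smul b x) = smul (a * b) x) \<and>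
     (\<forall>a b x. le (smul (a + b) x) (add (smul a x) (smul b x))) \<and>
     (\<forall>x. smul 1 x = x) \<and>
     \<comment> \<open>(A4)\<close>
     (\<forall>a x. smul a x = zero \<longleftrightarrow> a = 0 \<or> x = zero) \<and>
     \<comment> \<open>(A5)\<close>
     (\<forall>x. add x (smul (-1) x) = zero \<longleftrightarrow> x \<in> primitive le) \<and>
     \<comment> \<open>(A6)\<close>
     (\<forall>x. \<exists>p\<in>primitive le. le p x)"

definition Lset :: "('x \<Rightarrow> 'x \<Rightarrow> bool) \<Rightarrow> ('x \<Rightarrow> 'x \<Rightarrow> 'x)
                    \<Rightarrow> ('k::field \<Rightarrow> 'x \<Rightarrow> 'x) \<Rightarrow> 'x \<Rightarrow> 'x set" where
  "Lset le add smul x =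
     {z. \<exists>a p. a \<noteq> 0 \<and> p \<in> primitive le \<and> le (add (smul a x) p) z}"

definition generates :: "('x \<Rightarrow> 'x \<Rightarrow> bool) \<Rightarrow> ('x \<Rightarrow> 'x \<Rightarrow> 'x)
                    \<Rightarrow> ('k::field \<Rightarrow> 'x \<Rightarrow> 'x) \<Rightarrow> 'x set \<Rightarrow> bool" where
  "generates le add smul B \<longleftrightarrow>
     B \<subseteq> - primitive le \<and> - primitive le = (\<Union>b\<in>B. Lset le add smul b)"

definition orderly_independent :: "('x \<Rightarrow> 'x \<Rightarrow> bool) \<Rightarrow> ('x \<Rightarrow> 'x \<Rightarrow> 'x)
                    \<Rightarrow> ('k::field \<Rightarrow> 'x \<Rightarrow> 'x) \<Rightarrow> 'x set \<Rightarrow> bool" where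
  "orderly_independent le add smul B \<longleftrightarrow>
     B \<subseteq> - primitive le \<and>
     (\<forall>x\<in>B. \<forall>y\<in>B. x \<noteq> y \<longrightarrow> x \<notin> Lset le add smul y \<and> y \<notin> Lset le add smul x)"

definition is_basis :: "('x \<Rightarrow> 'x \<Rightarrow> bool) \<Rightarrow> ('x \<Rightarrow> 'x \<Rightarrow> 'x)
                    \<Rightarrow> ('k::field \<Rightarrow> 'x \<Rightarrow> 'x) \<Rightarrow> 'x set \<Rightarrow> bool" where
  "is_basis le add smul B \<longleftrightarrow>
     orderly_independent le add smul B \<and> generates le add smul B"

definition minimal_generating :: "('x \<Rightarrow> 'x \<Rightarrow> bool) \<Rightarrow> ('x \<Rightarrow> 'x \<Rightarrow> 'x)
                    \<Rightarrow> ('k::field \<Rightarrow> 'x \<Rightarrow> 'x) \<Rightarrow> 'x set \<Rightarrow> bool" where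
  "minimal_generating le add smul B \<longleftrightarrow>
     generates le add smul B \<and> (\<forall>C. C \<subset> B \<longrightarrow> \<not> generates le add smul C)"

end

theory Submission
  imports Defs
begin

lemma evs_rf:
  assumes "evs le add zero (smul :: 'k::field \<Rightarrow> 'x \<Rightarrow> 'x)"
  shows "\<forall>x. le x x"
  using assms unfolding evs_def apply (elim conjE) apply assumption done

lemma evs_tr:
  assumes "evs le add zero (smul :: 'k::field \<Rightarrow> 'x \<Rightarrow> 'x)"
  shows "\<forall>x y z. le x y \<and> le y z \<longrightarrow> le x z"
  using assms unfolding evs_def apply (elim conjE) apply assumption done

lemma evs_as:
  assumes "evs le add zero (smul :: 'k::field \<Rightarrow> 'x \<Rightarrow> 'x)"
  shows "\<forall>x y z. add (add x y) z = add x (add y z)"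
  using assms unfolding evs_def apply (elim conjE) apply assumption done

lemma evs_cm:
  assumes "evs le add zero (smul :: 'k::field \<Rightarrow> 'x \<Rightarrow> 'x)"
  shows "\<forall>x y. add x y = add y x"
  using assms unfolding evs_def apply (elim conjE) apply assumption done

lemma evs_z:
  assumes "evs le add zero (smul :: 'k::field \<Rightarrow> 'x \<Rightarrow> 'x)"
  shows "\<forall>x. add x zero = x"
  using assms unfolding evs_def apply (elim conjE) apply assumption done

lemma evs_A2a:
  assumes "evs le add zero (smul :: 'k::field \<Rightarrow> 'x \<Rightarrow> 'x)"
  shows "\<forall>x y z. le x y \<longrightarrow> le (add x z) (add y z)"
  using assms unfolding evs_def apply (elim conjE) apply assumption done

lemma evs_A2b:
  assumes "evs le add zero (smul :: 'k::field \<Rightarrow> 'x \<Rightarrow> 'x)"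
  shows "\<forall>x y a. le x y \<longrightarrow> le (smul a x) (smul a y)"
  using assms unfolding evs_def apply (elim conjE) apply assumption done

lemma evs_A3a:
  assumes "evs le add zero (smul :: 'k::field \<Rightarrow> 'x \<Rightarrow> 'x)"
  shows "\<forall>a x y. smul a (add x y) = add (smul a x) (smul a y)"
  using assms unfolding evs_def apply (elim conjE) apply assumption done

lemma evs_A3b:
  assumes "evs le add zero (smul :: 'k::field \<Rightarrow> 'x \<Rightarrow> 'x)"
  shows "\<forall>a b x. smul a (smul b x) = smul (a * b) x"
  using assms unfolding evs_def apply (elim conjE) apply assumption done

lemma evs_one:
  assumes "evs le add zero (smul :: 'k::field \<Rightarrow> 'x \<Rightarrow> 'x)"
  shows "\<forall>x. smul 1 x = x"
  using assms unfolding evs_def apply (elim conjE) apply assumption done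

lemma evs_A4:
  assumes "evs le add zero (smul :: 'k::field \<Rightarrow> 'x \<Rightarrow> 'x)"
  shows "\<forall>a x. smul a x = zero \<longleftrightarrow> a = 0 \<or> x = zero"
  using assms unfolding evs_def apply (elim conjE) apply assumption done

lemma evs_A5:
  assumes "evs le add zero (smul :: 'k::field \<Rightarrow> 'x \<Rightarrow> 'x)"
  shows "\<forall>x. add x (smul (-1) x) = zero \<longleftrightarrow> x \<in> primitive le"
  using assms unfolding evs_def apply (elim conjE) apply assumption done


lemma prim_smul:
  assumes e: "evs le add zero (smul :: 'k::field \<Rightarrow> 'x \<Rightarrow> 'x)" and p: "p \<in> primitive le"
  shows "smul b p \<in> primitive le"
proof -
  note rf = evs_rf[OF e, rule_format] and tr = evs_tr[OF e, rule_format] and as = evs_as[OF e, rule_format] and cm = evs_cm[OF e, rule_format] and z = evs_z[OF e, rule_format] and A2a = evs_A2a[OF e, rule_format] and A2b = evs_A2b[OF e, rule_format] and A3a = evs_A3a[OF e, rule_format] and A3b = evs_A3b[OF e, rule_format] and one = evs_one[OF e, rule_format] and A4 = evs_A4[OF e, rule_format] and A5 = evs_A5[OF e, rule_format]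
  have "add p (smul (-1) p) = zero" using A5 p by blast
  hence "smul b (add p (smul (-1) p)) = zero" using A4 by simp
  hence "add (smul b p) (smul (b * -1) p) = zero" using A3a A3b by simp
  hence "add (smul b p) (smul (-1) (smul b p)) = zero" using A3b by (simp add: mult.commute)
  thus ?thesis using A5 by blast
qed

lemma prim_add:
  assumes e: "evs le add zero (smul :: 'k::field \<Rightarrow> 'x \<Rightarrow> 'x)" and p: "p \<in> primitive le" and q: "q \<in> primitive le"
  shows "add p q \<in> primitive le"
proof -
  note rf = evs_rf[OF e, rule_format] and tr = evs_tr[OF e, rule_format] and as = evs_as[OF e, rule_format] and cm = evs_cm[OF e, rule_format] and z = evs_z[OF e, rule_format] and A2a = evs_A2a[OF e, rule_format] and A2b = evs_A2b[OF e, rule_format] and A3a = evs_A3a[OF e, rule_format] and A3b = evs_A3b[OF e, rule_format] and one = evs_one[OF e, rule_format] and A4 = evs_A4[OF e, rule_format] and A5 = evs_A5[OF e, rule_format]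
  have "add (add p q) (smul (-1) (add p q)) = add (add p (smul (-1) p)) (add q (smul (-1) q))"
  proof -
    interpret abel_semigroup add by unfold_locales (rule as, rule cm)
    show ?thesis by (simp add: A3a ac_simps)
  qed
  also have "\<dots> = zero"
  proof -
    have "add p (smul (-1) p) = zero" "add q (smul (-1) q) = zero" using A5 p q by blast+
    thus ?thesis using z by simp
  qed
  finally show ?thesis using A5 by blast
qed

lemma self_L:
  assumes e: "evs le add zero (smul :: 'k::field \<Rightarrow> _ \<Rightarrow> _)"
  shows "x \<in> Lset le add smul x"
proof -
  note rf = evs_rf[OF e, rule_format] and tr = evs_tr[OF e, rule_format] and as = evs_as[OF e, rule_format] and cm = evs_cm[OF e, rule_format] and z = evs_z[OF e, rule_format] and A2a = evs_A2a[OF e, rule_format] and A2b = evs_A2b[OF e, rule_format] and A3a = evs_A3a[OF e, rule_format] and A3b = evs_A3b[OF e, rule_format] and one = evs_one[OF e, rule_format] and A4 = evs_A4[OF e, rule_format] and A5 = evs_A5[OF e, rule_format]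
  have "smul (-1::'k) zero = zero" using A4 by blast
  hence "add zero (smul (-1::'k) zero) = zero" using z by simp
  hence "zero \<in> primitive le" using A5 by blast
  moreover have "le (add (smul (1::'k) x) zero) x" using z one rf by simp
  ultimately show ?thesis unfolding Lset_def by (auto intro!: exI[of _ "1::'k"])
qed

lemma trans_L:
  assumes e: "evs le add zero (smul :: 'k::field \<Rightarrow> _ \<Rightarrow> _)"
    and y: "y \<in> Lset le add smul x" and zz: "z \<in> Lset le add smul y"
  shows "z \<in> Lset le add smul x"
proof -
  note rf = evs_rf[OF e, rule_format] and tr = evs_tr[OF e, rule_format] and as = evs_as[OF e, rule_format] and cm = evs_cm[OF e, rule_format] and z = evs_z[OF e, rule_format] and A2a = evs_A2a[OF e, rule_format] and A2b = evs_A2b[OF e, rule_format] and A3a = evs_A3a[OF e, rule_format] and A3b = evs_A3b[OF e, rule_format] and one = evs_one[OF e, rule_format] and A4 = evs_A4[OF e, rule_format] and A5 = evs_A5[OF e, rule_format]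
  obtain a p where a: "a \<noteq> 0" "p \<in> primitive le" "le (add (smul a x) p) y"
    using y unfolding Lset_def by blast
  obtain b q where b: "b \<noteq> 0" "q \<in> primitive le" "le (add (smul b y) q) z"
    using zz unfolding Lset_def by blast
  have "le (smul b (add (smul a x) p)) (smul b y)" using A2b a(3) by blast
  hence "le (add (smul b (add (smul a x) p)) q) (add (smul b y) q)" using A2a by blast
  hence "le (add (smul b (add (smul a x) p)) q) z" using tr b(3) by blast
  moreover have "add (smul b (add (smul a x) p)) q = add (smul (b*a) x) (add (smul b p) q)"
    by (simp add: A3a A3b as)
  moreover have "add (smul b p) q \<in> primitive le"
    using prim_add[OF e prim_smul[OF e a(2)] b(2)] .
  moreover have "b * a \<noteq> 0" using a b by simp
  ultimately show ?thesis unfolding Lset_def by fastforce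
qed

theorem mainTheorem2:
  fixes le :: "'x \<Rightarrow> 'x \<Rightarrow> bool" and add :: "'x \<Rightarrow> 'x \<Rightarrow> 'x" and zero :: 'x
    and smul :: "'k::field \<Rightarrow> 'x \<Rightarrow> 'x" and B :: "'x set"
  assumes "evs le add zero smul"
    and "B \<subseteq> - primitive le"
  shows "is_basis le add smul B \<longleftrightarrow> minimal_generating le add smul B"
proof
  assume h: "is_basis le add smul B"
  hence g: "generates le add smul B" and ind: "orderly_independent le add smul B"
    unfolding is_basis_def by auto
  have "\<not> generates le add smul C" if C: "C \<subset> B" for C
  proof
    assume gc: "generates le add smul C"
    obtain b where b: "b \<in> B" "b \<notin> C" using C by blast
    hence "b \<in> - primitive le" using assms(2) by blast
    then obtain c where c: "c \<in> C" "b \<in> Lset le add smul c" using gc unfolding generates_def by blast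
    hence "c \<in> B" "c \<noteq> b" using C b by auto
    thus False using ind b c unfolding orderly_independent_def by blast
  qed
  thus "minimal_generating le add smul B" using g unfolding minimal_generating_def by blast
next
  assume m: "minimal_generating le add smul B"
  hence g: "generates le add smul B" and mn: "\<And>C. C \<subset> B \<Longrightarrow> \<not> generates le add smul C"
    unfolding minimal_generating_def by auto
  have key: False if xy: "x \<in> B" "y \<in> B" "x \<noteq> y" "x \<in> Lset le add smul y" for x y
  proof -
    have "generates le add smul (B - {x})"
      unfolding generates_def
    proof (intro conjI)
      show "B - {x} \<subseteq> - primitive le" using assms(2) by blast
      show "- primitive le = (\<Union>b\<in>B - {x}. Lset le add smul b)"
      proof
        show "- primitive le \<subseteq> (\<Union>b\<in>B - {x}. Lset le add smul b)"
        proof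
          fix z assume "z \<in> - primitive le"
          then obtain b where b: "b \<in> B" "z \<in> Lset le add smul b" using g unfolding generates_def by blast
          show "z \<in> (\<Union>b\<in>B - {x}. Lset le add smul b)"
          proof (cases "b = x")
            case True
            hence "z \<in> Lset le add smul y" using trans_L[OF assms(1) xy(4)] b by simp
            thus ?thesis using xy by blast
          next
            case False thus ?thesis using b by blast
          qed
        qed
        show "(\<Union>b\<in>B - {x}. Lset le add smul b) \<subseteq> - primitive le"
          using g unfolding generates_def by blast
      qed
    qed
    moreover have "B - {x} \<subset> B" using xy by blast
    ultimately show False using mn by blast
  qed
  have "orderly_independent le add smul B"
    unfolding orderly_independent_def using assms(2) key by blast
  thus "is_basis le add smul B" using g unfolding is_basis_def by blast
qed

end
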